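(* Let $x=(p_1,\dots,p_N)\in\mathbb R^{N\times 3}$ be a point cloud and $\|x\|_2=(\sum_i\|p_i\|_2^2)^{1/2}$. Let $\sigma>0$, let $\epsilon\in\mathbb R^{N\times3}$ have i.i.d. $\mathcal N(0,\sigma^2)$ entries, and $q(y\mid x';\epsilon)=\mathbb E_\epsilon[P(y\mid x'+\epsilon)]$ for a base classifier $P$. Let $0<R\le\pi$, $\eta\ge0$, $\delta\ge0$ with $\frac{\delta^2}{4}+\frac{\eta^2R^2}{8}\le 1$. Let $z_j=(k_j,\theta_j)$, $j=1,\dots,M$, with $k_j\in S^2$, $\theta_j\in[0,R]$, such that for every $k\in S^2$ and $\theta\in[0,R]$ there is a $j$ with $\angle(k,k_j)\le\eta$ and $|\theta-\theta_j|\le\delta$. Suppose $y_A\in\mathcal Y$ and $p_A^{(j)},p_B^{(j)}\in(0,1)$ satisfy for all $j$ $$q(y_A\mid\phi_R(x,z_j);\epsilon)\ge p_A^{(j)}>p_B^{(j)}\ge\max_{y\ne y_A}q(y\mid\phi_R(x,z_j);\epsilon)$$ and $$\frac{\sigma}{2}\Big(\Phi^{-1}(p_A^{(j)})-\Phi^{-1}(p_B^{(j)})\Big)>\pi\sqrt{\frac{\delta^2}{4}+\frac{\eta^2R^2}{8}}\;\|x\|_2 .$$ Then for every $k\in S^2$, $\theta\in[0,R]$ and $y\ne y_A$: $q(y_A\mid\phi_R(x,(k,\theta));\epsilon)>q(y\mid\phi_R(x,(k,\theta));\epsilon)$.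
   Context: The general rotation with parameter $(k,\theta)\in S^2\times\mathbb R_{\ge0}$ acts pointwise by $\phi_R(p_i,(k,\theta))=Rot(k,\theta)p_i$, where $Rot(k,\theta)\in SO(3)$ is the rotation by angle $\theta$ about the unit axis $k$. $\angle(k,k_j)\in[0,\pi]$ denotes the angle between unit vectors $k,k_j$. Labels $\mathcal Y=\{1,\dots,C\}$; a base classifier is a measurable map $x\mapsto P(\cdot\mid x)$ to probability vectors on $\mathcal Y$. $\Phi$ is the standard normal CDF. *)

theory Defs
  imports "HOL-Analysis.Analysis" "HOL-Probability.Probability"
begin

text \<open>Rotation by angle theta about unit axis k (Rodrigues' formula), as a 3x3 matrix.\<close>
definition Rot :: "real^3 \<Rightarrow> real \<Rightarrow> real^3^3" where
  "Rot k \<theta> = matrix (\<lambda>p. cos \<theta> *\<^sub>R p + sin \<theta> *\<^sub>R cross3 k p + ((1 - cos \<theta>) * (k \<bullet> p)) *\<^sub>R k)"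

text \<open>Point clouds of N points: real^3^'n with N = CARD('n). General rotation acting pointwise.\<close>
definition phi_R :: "real^3^'n \<Rightarrow> real^3 \<Rightarrow> real \<Rightarrow> real^3^'n" where
  "phi_R x k \<theta> = (\<chi> i. Rot k \<theta> *v (x $ i))"

definition vangle :: "real^3 \<Rightarrow> real^3 \<Rightarrow> real" where
  "vangle k k' = arccos (k \<bullet> k')"

definition gauss_noise :: "real \<Rightarrow> (real^3^'n) measure" where
  "gauss_noise \<sigma> = density lborel (\<lambda>e. ennreal (\<Prod>i\<in>UNIV. \<Prod>c\<in>UNIV. normal_density 0 \<sigma> (e $ i $ c)))"

definition smoothed :: "(real^3^'n \<Rightarrow> nat \<Rightarrow> real) \<Rightarrow> real \<Rightarrow> real^3^'n \<Rightarrow> nat \<Rightarrow> real" where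
  "smoothed P \<sigma> x' y = (\<integral>e. P (x' + e) y \<partial>gauss_noise \<sigma>)"

definition Phi :: "real \<Rightarrow> real" where
  "Phi t = measure (density lborel std_normal_density) {..t}"

definition Phi_inv :: "real \<Rightarrow> real" where
  "Phi_inv p = (THE t. Phi t = p)"

definition base_classifier :: "nat \<Rightarrow> (real^3^'n \<Rightarrow> nat \<Rightarrow> real) \<Rightarrow> bool" where
  "base_classifier C P \<longleftrightarrow>
     (\<forall>y. (\<lambda>x. P x y) \<in> borel_measurable borel) \<and>
     (\<forall>x. (\<forall>y. 0 \<le> P x y) \<and> (\<forall>y. y \<notin> {1..C} \<longrightarrow> P x y = 0) \<and> (\<Sum>y\<in>{1..C}. P x y) = 1)"

end

theory Submission
  imports Defs
begin

definition nd :: "real \<Rightarrow> real \<Rightarrow> real" where "nd \<sigma> x = normal_density 0 \<sigma> x"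

lemma L1:
  fixes \<sigma> :: real
  assumes s: "0 < \<sigma>"
  shows "density lborel (\<lambda>e::'a::euclidean_space. ennreal (\<Prod>b\<in>Basis. normal_density 0 \<sigma> (e \<bullet> b)))
     = distr (PiM Basis (\<lambda>_. density lborel (\<lambda>x. ennreal (normal_density 0 \<sigma> x)))) borel (\<lambda>f. \<Sum>b\<in>Basis. f b *\<^sub>R b)"
proof -
  let ?N = "density lborel (\<lambda>x. ennreal (normal_density 0 \<sigma> x))"
  let ?emb = "(\<lambda>f. \<Sum>b\<in>Basis. f b *\<^sub>R b) :: ('a \<Rightarrow> real) \<Rightarrow> 'a"
  have embm[measurable]: "?emb \<in> measurable (PiM Basis (\<lambda>_. lborel)) borel"
    by measurable
  have pN: "prob_space ?N" using prob_space_normal_density s by auto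
  interpret PS: product_sigma_finite "\<lambda>_::'a. ?N"
    unfolding product_sigma_finite_def using pN prob_space_imp_sigma_finite by blast
  interpret PL: product_sigma_finite "\<lambda>_::'a. lborel :: real measure"
    unfolding product_sigma_finite_def by (simp add: lborel.sigma_finite_measure_axioms)
  have emb_b: "?emb f \<bullet> b = f b" if "b \<in> Basis" for f b
    using that by (simp add: inner_sum_left inner_Basis if_distrib cong: if_cong)
  have "density lborel (\<lambda>e::'a. ennreal (\<Prod>b\<in>Basis. normal_density 0 \<sigma> (e \<bullet> b)))
      = density (distr (PiM Basis (\<lambda>_. lborel)) borel ?emb) (\<lambda>e::'a. ennreal (\<Prod>b\<in>Basis. normal_density 0 \<sigma> (e \<bullet> b)))"
    by (subst lborel_eq) simp
  also have "\<dots> = distr (density (PiM Basis (\<lambda>_. lborel)) (\<lambda>f. ennreal (\<Prod>b\<in>Basis. normal_density 0 \<sigma> (?emb f \<bullet> b)))) borel ?emb"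
    by (rule density_distr[OF _ embm]) measurable
  also have "density (PiM Basis (\<lambda>_. lborel)) (\<lambda>f. ennreal (\<Prod>b\<in>Basis. normal_density 0 \<sigma> (?emb f \<bullet> b)))
     = density (PiM Basis (\<lambda>_. lborel)) (\<lambda>f. (\<Prod>b\<in>Basis. ennreal (normal_density 0 \<sigma> (f b))))"
    by (rule arg_cong[where f="density _"]) (auto simp: emb_b prod_ennreal normal_density_nonneg)
  also have "\<dots> = PiM Basis (\<lambda>_. ?N)"
  proof (rule PS.PiM_eqI)
    show "sets (density (PiM Basis (\<lambda>_. lborel)) (\<lambda>f. (\<Prod>b\<in>Basis. ennreal (normal_density 0 \<sigma> (f b)))))
       = sets (PiM Basis (\<lambda>_. ?N))"
      by (simp only: sets_density) (rule sets_PiM_cong; simp)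
  next
    fix A assume A: "\<And>i. i \<in> (Basis::'a set) \<Longrightarrow> A i \<in> sets ?N"
    have "emeasure (density (PiM Basis (\<lambda>_. lborel)) (\<lambda>f. (\<Prod>b\<in>Basis. ennreal (normal_density 0 \<sigma> (f b))))) (PiE Basis A)
       = (\<integral>\<^sup>+ f. (\<Prod>b\<in>Basis. ennreal (normal_density 0 \<sigma> (f b))) * indicator (PiE Basis A) f \<partial>PiM Basis (\<lambda>_. lborel))"
    proof (rule emeasure_density)
      show "PiE Basis A \<in> sets (PiM Basis (\<lambda>_. lborel))"
        by (rule sets_PiM_I_finite) (use A in auto)
    qed measurable
    also have "\<dots> = (\<integral>\<^sup>+ f. (\<Prod>b\<in>Basis. ennreal (normal_density 0 \<sigma> (f b)) * indicator (A b) (f b)) \<partial>PiM Basis (\<lambda>_. lborel))"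
    proof (rule nn_integral_cong)
      fix f assume "f \<in> space (PiM (Basis::'a set) (\<lambda>_. lborel::real measure))"
      then have ext: "f \<in> extensional (Basis::'a set)" by (simp add: space_PiM PiE_def)
      have "indicator (PiE Basis A) f = (\<Prod>b\<in>Basis. indicator (A b) (f b) :: ennreal)"
      proof (cases "\<forall>b\<in>Basis. f b \<in> A b")
        case True
        then have "f \<in> PiE Basis A" using ext by (auto simp: PiE_def)
        moreover have "(\<Prod>b\<in>Basis. indicator (A b) (f b) :: ennreal) = 1"
          using True by (intro prod.neutral) auto
        ultimately show ?thesis by simp
      next
        case False
        then obtain b where b: "b \<in> Basis" "f b \<notin> A b" by auto
        then have "f \<notin> PiE Basis A" by (auto simp: PiE_def)
        moreover have "(\<Prod>b\<in>Basis. indicator (A b) (f b) :: ennreal) = 0"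
          using b by (intro prod_zero) (auto intro!: bexI[of _ b])
        ultimately show ?thesis by simp
      qed
      then show "(\<Prod>b\<in>Basis. ennreal (normal_density 0 \<sigma> (f b))) * indicator (PiE Basis A) f
         = (\<Prod>b\<in>Basis. ennreal (normal_density 0 \<sigma> (f b)) * indicator (A b) (f b))"
        by (simp only: prod.distrib)
    qed
    also have "\<dots> = (\<Prod>b\<in>Basis. \<integral>\<^sup>+ x. ennreal (normal_density 0 \<sigma> x) * indicator (A b) x \<partial>lborel)"
      by (rule PL.product_nn_integral_prod) (use A in auto)
    also have "\<dots> = (\<Prod>b\<in>Basis. emeasure ?N (A b))"
      proof (intro prod.cong refl)
      fix b :: 'a assume "b \<in> Basis"
      then have "A b \<in> sets lborel" using A by simp
      then show "(\<integral>\<^sup>+ x. ennreal (normal_density 0 \<sigma> x) * indicator (A b) x \<partial>lborel) = emeasure ?N (A b)"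
        by (subst emeasure_density) auto
    qed
    finally show "emeasure (density (PiM Basis (\<lambda>_. lborel)) (\<lambda>f. (\<Prod>b\<in>Basis. ennreal (normal_density 0 \<sigma> (f b))))) (PiE Basis A)
       = (\<Prod>b\<in>Basis. emeasure ?N (A b))" .
  qed simp
  finally show ?thesis .
qed

lemma L3:
  fixes \<sigma> :: real and w :: "'a::euclidean_space"
  assumes s: "0 < \<sigma>" and w: "w \<noteq> 0"
  shows "distributed (density lborel (\<lambda>e::'a. ennreal (\<Prod>b\<in>Basis. normal_density 0 \<sigma> (e \<bullet> b)))) lborel
           (\<lambda>e. e \<bullet> w) (\<lambda>x. ennreal (normal_density 0 (\<sigma> * norm w) x))"
proof -
  define N where "N = density lborel (\<lambda>x. ennreal (normal_density 0 \<sigma> x))"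
  define M where "M = PiM (Basis::'a set) (\<lambda>_. N)"
  let ?emb = "(\<lambda>f. \<Sum>b\<in>Basis. f b *\<^sub>R b) :: ('a \<Rightarrow> real) \<Rightarrow> 'a"
  have G: "density lborel (\<lambda>e::'a. ennreal (\<Prod>b\<in>Basis. normal_density 0 \<sigma> (e \<bullet> b))) = distr M borel ?emb"
    unfolding M_def N_def by (rule L1[OF s])
  have pN: "prob_space N" unfolding N_def using prob_space_normal_density s by auto
  have pM: "prob_space M" unfolding M_def by (rule prob_space_PiM) (use pN in auto)
  interpret prob_space M by (rule pM)
  have setsN: "sets N = sets borel" by (simp add: N_def)
  have sM: "sets M = sets (PiM (Basis::'a set) (\<lambda>_. borel))"
    unfolding M_def by (rule sets_PiM_cong) (auto simp: setsN)
  have meas_comp: "(\<lambda>f. f b) \<in> measurable M borel" if "b \<in> Basis" for b :: 'a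
    using measurable_component_singleton[OF that, of "\<lambda>_. borel"] by (simp add: measurable_cong_sets[OF sM refl])
  have compN: "distr M borel (\<lambda>f. f b) = N" if "b \<in> Basis" for b :: 'a
  proof -
    have "distr M borel (\<lambda>f. f b) = distr M N (\<lambda>f. f b)"
      by (rule distr_cong) (auto simp: setsN)
    also have "\<dots> = N" unfolding M_def by (rule distr_PiM_component) (use pN that in auto)
    finally show ?thesis .
  qed
  have indep: "indep_vars (\<lambda>_. borel) (\<lambda>b f. f b) (Basis::'a set)"
  proof (subst indep_vars_iff_distr_eq_PiM')
    show "Basis \<noteq> ({}::'a set)" by simp
    show "random_variable borel (\<lambda>f. f b)" if "b \<in> Basis" for b :: 'a using meas_comp[OF that] .
    have "distr M (PiM Basis (\<lambda>_. borel)) (\<lambda>x. \<lambda>i\<in>Basis. x i) = distr M (PiM Basis (\<lambda>_. borel)) (\<lambda>x. x)"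
      by (rule distr_cong) (auto simp: M_def space_PiM PiE_def extensional_restrict)
    also have "\<dots> = M" by (rule distr_id2) (simp add: sM)
    also have "\<dots> = PiM Basis (\<lambda>b. distr M borel (\<lambda>f. f b))"
      unfolding M_def by (rule PiM_cong) (auto simp: compN[unfolded M_def])
    finally show "distr M (PiM Basis (\<lambda>_. borel)) (\<lambda>x. \<lambda>i\<in>Basis. x i) = PiM Basis (\<lambda>b. distr M borel (\<lambda>f. f b))" .
  qed
  define I where "I = {b\<in>(Basis::'a set). w \<bullet> b \<noteq> 0}"
  have finI: "finite I" unfolding I_def by simp
  have neI: "I \<noteq> {}" using w euclidean_all_zero_iff[of w] unfolding I_def by blast
  have indep2: "indep_vars (\<lambda>_. borel) (\<lambda>b f. (w \<bullet> b) * f b) I"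
    by (rule indep_vars_compose2[where X="\<lambda>b f. f b" and M'="\<lambda>_. borel", OF indep_vars_subset[OF indep]])
       (auto simp: I_def)
  have dX: "distributed M lborel (\<lambda>f. (w \<bullet> b) * f b) (\<lambda>x. ennreal (normal_density 0 (\<bar>w \<bullet> b\<bar> * \<sigma>) x))"
    if b: "b \<in> I" for b
  proof -
    have bB: "b \<in> Basis" using b by (simp add: I_def)
    have d0: "distributed M lborel (\<lambda>f. f b) (\<lambda>x. ennreal (normal_density 0 \<sigma> x))"
      unfolding distributed_def
    proof (intro conjI)
      have "distr M lborel (\<lambda>f. f b) = distr M borel (\<lambda>f. f b)"
        by (rule distr_cong) auto
      then show "distr M lborel (\<lambda>f. f b) = density lborel (\<lambda>x. ennreal (normal_density 0 \<sigma> x))"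
        using compN[OF bB] by (simp add: N_def)
      show "(\<lambda>f. f b) \<in> measurable M lborel" using meas_comp[OF bB] by simp
    qed simp
    have "distributed M lborel (\<lambda>f. 0 + (w \<bullet> b) * f b) (\<lambda>x. ennreal (normal_density (0 + (w \<bullet> b) * 0) (\<bar>w \<bullet> b\<bar> * \<sigma>) x))"
      by (rule normal_density_affine[OF d0 s]) (use b in \<open>simp add: I_def\<close>)
    then show ?thesis by simp
  qed
  have sumd: "distributed M lborel (\<lambda>f. \<Sum>b\<in>I. (w \<bullet> b) * f b)
      (\<lambda>x. ennreal (normal_density (\<Sum>b\<in>I. 0) (sqrt (\<Sum>b\<in>I. (\<bar>w \<bullet> b\<bar> * \<sigma>)\<^sup>2)) x))"
    by (rule sum_indep_normal[OF finI neI indep2]) (use dX s in \<open>auto simp: I_def\<close>)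
  have sq: "sqrt (\<Sum>b\<in>I. (\<bar>w \<bullet> b\<bar> * \<sigma>)\<^sup>2) = \<sigma> * norm w"
  proof -
    have "(\<Sum>b\<in>I. (\<bar>w \<bullet> b\<bar> * \<sigma>)\<^sup>2) = \<sigma>\<^sup>2 * (\<Sum>b\<in>Basis. (w \<bullet> b)\<^sup>2)"
    proof -
      have "(\<Sum>b\<in>Basis. (w \<bullet> b)\<^sup>2) = (\<Sum>b\<in>I. (w \<bullet> b)\<^sup>2)"
        unfolding I_def by (rule sum.mono_neutral_right) auto
      then show ?thesis by (simp add: sum_distrib_left power_mult_distrib mult.commute)
    qed
    also have "(\<Sum>b\<in>Basis. (w \<bullet> b)\<^sup>2) = (norm w)\<^sup>2"
    proof -
      have "(\<Sum>b\<in>Basis. (w \<bullet> b)\<^sup>2) = w \<bullet> w" by (simp add: euclidean_inner[of w w] power2_eq_square)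
      then show ?thesis by (simp add: dot_square_norm)
    qed
    finally show ?thesis using s by (simp add: real_sqrt_mult)
  qed
  have eqf: "?emb f \<bullet> w = (\<Sum>b\<in>I. (w \<bullet> b) * f b)" for f
  proof -
    have "?emb f \<bullet> w = (\<Sum>b\<in>Basis. (w \<bullet> b) * f b)"
      unfolding inner_sum_left inner_scaleR_left by (simp add: inner_commute mult.commute)
    also have "\<dots> = (\<Sum>b\<in>I. (w \<bullet> b) * f b)"
      unfolding I_def by (rule sum.mono_neutral_right) auto
    finally show ?thesis .
  qed
  have sumd': "distributed M lborel (\<lambda>f. ?emb f \<bullet> w) (\<lambda>x. ennreal (normal_density 0 (\<sigma> * norm w) x))"
    using sumd by (simp add: sq eqf)
  have embm: "?emb \<in> measurable M borel"
    unfolding measurable_cong_sets[OF sM refl] by measurable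
  show ?thesis
    unfolding G distributed_def
  proof (intro conjI)
    have "distr (distr M borel ?emb) lborel (\<lambda>e. e \<bullet> w) = distr M lborel ((\<lambda>e. e \<bullet> w) \<circ> ?emb)"
      by (rule distr_distr) (auto simp: embm)
    also have "\<dots> = density lborel (\<lambda>x. ennreal (normal_density 0 (\<sigma> * norm w) x))"
      using sumd' unfolding distributed_def by (simp add: o_def)
    finally show "distr (distr M borel ?emb) lborel (\<lambda>e. e \<bullet> w) = density lborel (\<lambda>x. ennreal (normal_density 0 (\<sigma> * norm w) x))" .
    show "(\<lambda>e. e \<bullet> w) \<in> measurable (distr M borel ?emb) lborel"
      by (simp add: measurable_distr_eq1)
  qed simp
qed

definition gd :: "real \<Rightarrow> 'a::euclidean_space \<Rightarrow> real" where
  "gd \<sigma> e = (\<Prod>b\<in>Basis. normal_density 0 \<sigma> (e \<bullet> b))"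

definition GN :: "real \<Rightarrow> 'a::euclidean_space measure" where
  "GN \<sigma> = density lborel (\<lambda>e. ennreal (gd \<sigma> e))"

lemma gd_nonneg: "0 \<le> gd \<sigma> e"
  unfolding gd_def by (intro prod_nonneg) auto

lemma gd_meas[measurable]: "gd \<sigma> \<in> borel_measurable borel"
  unfolding gd_def by measurable

lemma GN_sets[simp]: "sets (GN \<sigma>) = sets borel" by (simp add: GN_def)
lemma GN_space[simp]: "space (GN \<sigma>) = UNIV" by (simp add: GN_def)

lemma GN_prob:
  assumes s: "0 < \<sigma>"
  shows "prob_space (GN \<sigma> :: 'a::euclidean_space measure)"
proof -
  define N where "N = density lborel (\<lambda>x. ennreal (normal_density 0 \<sigma> x))"
  define M where "M = PiM (Basis::'a set) (\<lambda>_. N)"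
  have pN: "prob_space N" unfolding N_def using prob_space_normal_density s by auto
  have pM: "prob_space M" unfolding M_def by (rule prob_space_PiM) (use pN in auto)
  have sM: "sets M = sets (PiM (Basis::'a set) (\<lambda>_. borel))"
    unfolding M_def by (rule sets_PiM_cong) (auto simp: N_def)
  have embm: "(\<lambda>f. \<Sum>b\<in>Basis. f b *\<^sub>R b) \<in> measurable M (borel :: 'a measure)"
    unfolding measurable_cong_sets[OF sM refl] by measurable
  have "GN \<sigma> = distr M borel (\<lambda>f. \<Sum>b\<in>Basis. f b *\<^sub>R b)"
    unfolding GN_def gd_def M_def N_def by (rule L1[OF s])
  then show ?thesis using prob_space.prob_space_distr[OF pM embm] by simp
qed

lemma gd_shift:
  assumes s: "0 < \<sigma>"
  shows "gd \<sigma> (u - w) = gd \<sigma> u * exp ((u \<bullet> w) / \<sigma>\<^sup>2 - (norm w)\<^sup>2 / (2 * \<sigma>\<^sup>2))"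
proof -
  have fac: "normal_density 0 \<sigma> (x - y) = normal_density 0 \<sigma> x * exp (x * y / \<sigma>\<^sup>2 - y\<^sup>2 / (2 * \<sigma>\<^sup>2))" for x y
  proof -
    have "-(x - y)\<^sup>2 / (2 * \<sigma>\<^sup>2) = -x\<^sup>2 / (2 * \<sigma>\<^sup>2) + (x * y / \<sigma>\<^sup>2 - y\<^sup>2 / (2 * \<sigma>\<^sup>2))"
      using s by (simp add: field_simps power2_eq_square)
    then have "exp (-(x - y)\<^sup>2 / (2 * \<sigma>\<^sup>2)) = exp (-x\<^sup>2 / (2 * \<sigma>\<^sup>2)) * exp (x * y / \<sigma>\<^sup>2 - y\<^sup>2 / (2 * \<sigma>\<^sup>2))"
      by (simp only: exp_add)
    then show ?thesis unfolding normal_density_def by simp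
  qed
  have "gd \<sigma> (u - w) = (\<Prod>b\<in>Basis. normal_density 0 \<sigma> (u \<bullet> b) * exp ((u \<bullet> b) * (w \<bullet> b) / \<sigma>\<^sup>2 - (w \<bullet> b)\<^sup>2 / (2 * \<sigma>\<^sup>2)))"
    unfolding gd_def by (simp add: inner_diff_left fac)
  also have "\<dots> = gd \<sigma> u * exp (\<Sum>b\<in>Basis. (u \<bullet> b) * (w \<bullet> b) / \<sigma>\<^sup>2 - (w \<bullet> b)\<^sup>2 / (2 * \<sigma>\<^sup>2))"
    unfolding gd_def by (simp add: prod.distrib exp_sum)
  also have "(\<Sum>b\<in>Basis. (u \<bullet> b) * (w \<bullet> b) / \<sigma>\<^sup>2 - (w \<bullet> b)\<^sup>2 / (2 * \<sigma>\<^sup>2)) = (u \<bullet> w) / \<sigma>\<^sup>2 - (norm w)\<^sup>2 / (2 * \<sigma>\<^sup>2)"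
  proof -
    have "(\<Sum>b\<in>Basis. (w \<bullet> b)\<^sup>2) = (norm w)\<^sup>2"
    proof -
      have "(\<Sum>b\<in>Basis. (w \<bullet> b)\<^sup>2) = w \<bullet> w" by (simp add: euclidean_inner[of w w] power2_eq_square)
      then show ?thesis by (simp add: dot_square_norm)
    qed
    moreover have "(\<Sum>b\<in>Basis. (u \<bullet> b) * (w \<bullet> b)) = u \<bullet> w" by (simp add: euclidean_inner[of u w])
    ultimately show ?thesis by (simp add: sum_subtractf sum_divide_distrib[symmetric])
  qed
  finally show ?thesis .
qed

lemma GN_shift:
  assumes s: "0 < \<sigma>" and h[measurable]: "h \<in> borel_measurable borel"
  shows "(\<integral>\<^sup>+ e. h (e + w) \<partial>GN \<sigma>) =
         (\<integral>\<^sup>+ e. h e * ennreal (exp ((e \<bullet> w) / \<sigma>\<^sup>2 - (norm w)\<^sup>2 / (2 * \<sigma>\<^sup>2))) \<partial>(GN \<sigma> :: 'a::euclidean_space measure))"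
proof -
  let ?r = "\<lambda>e::'a. exp ((e \<bullet> w) / \<sigma>\<^sup>2 - (norm w)\<^sup>2 / (2 * \<sigma>\<^sup>2))"
  have "(\<integral>\<^sup>+ e. h (e + w) \<partial>GN \<sigma>) = (\<integral>\<^sup>+ e. ennreal (gd \<sigma> e) * h (e + w) \<partial>lborel)"
    unfolding GN_def by (subst nn_integral_density) auto
  also have "\<dots> = (\<integral>\<^sup>+ e. ennreal (gd \<sigma> ((w + e) - w)) * h (w + e) \<partial>lborel)"
    by (simp add: add.commute)
  also have "\<dots> = (\<integral>\<^sup>+ u. ennreal (gd \<sigma> (u - w)) * h u \<partial>distr lborel borel ((+) w))"
    by (subst nn_integral_distr) auto
  also have "\<dots> = (\<integral>\<^sup>+ u. ennreal (gd \<sigma> (u - w)) * h u \<partial>lborel)"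
    by (simp add: lborel_distr_plus)
  also have "\<dots> = (\<integral>\<^sup>+ u. ennreal (gd \<sigma> u) * (h u * ennreal (?r u)) \<partial>lborel)"
    by (intro nn_integral_cong) (simp add: gd_shift[OF s] ennreal_mult' gd_nonneg mult_ac)
  also have "\<dots> = (\<integral>\<^sup>+ e. h e * ennreal (?r e) \<partial>GN \<sigma>)"
    unfolding GN_def by (subst nn_integral_density) auto
  finally show ?thesis .
qed

abbreviation "SN \<equiv> density lborel (\<lambda>x. ennreal (std_normal_density x))"

lemma SN_prob: "prob_space SN"
  using prob_space_normal_density[of 1 0] by simp

interpretation SN: real_distribution SN
  by (simp add: real_distribution_def real_distribution_axioms_def SN_prob)

lemma Phi_cdf: "Phi = cdf SN"
  unfolding Phi_def cdf_def by simp

lemma Phi_cont: "isCont Phi x"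
proof -
  have "emeasure SN {x} = (\<integral>\<^sup>+ t. ennreal (std_normal_density t) * indicator {x} t \<partial>lborel)"
    by (subst emeasure_density) auto
  also have "\<dots> = (\<integral>\<^sup>+ t. 0 \<partial>(lborel::real measure))"
  proof (rule nn_integral_cong_AE)
    show "AE t in lborel. ennreal (std_normal_density t) * indicator {x} t = 0"
      using AE_lborel_singleton[of x] by eventually_elim auto
  qed
  finally have "measure SN {x} = 0" by (simp add: measure_def)
  then show ?thesis unfolding Phi_cdf using SN.isCont_cdf by blast
qed

lemma Phi_strict: assumes "a < b" shows "Phi a < Phi b"
proof -
  define K where "K = max \<bar>a\<bar> \<bar>b\<bar>"
  define c where "c = std_normal_density K"
  have cpos: "0 < c" unfolding c_def by (simp add: normal_density_pos)
  have low: "c \<le> std_normal_density t" if "t \<in> {a<..b}" for t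
  proof -
    have "\<bar>t\<bar> \<le> K" using that unfolding K_def by auto
    then have "t\<^sup>2 \<le> K\<^sup>2" by (metis abs_ge_zero power2_abs power_mono)
    then have "exp (-(K\<^sup>2/2)) \<le> exp (-(t\<^sup>2/2))" by simp
    then show ?thesis unfolding c_def std_normal_density_def by (simp add: divide_right_mono)
  qed
  have "ennreal (c * (b - a)) = (\<integral>\<^sup>+ t. ennreal c * indicator {a<..b} t \<partial>lborel)"
    using assms cpos by (simp add: nn_integral_cmult_indicator ennreal_mult)
  also have "\<dots> \<le> (\<integral>\<^sup>+ t. ennreal (std_normal_density t) * indicator {a<..b} t \<partial>lborel)"
    by (intro nn_integral_mono) (auto simp: low split: split_indicator)
  also have "\<dots> = emeasure SN {a<..b}"
    by (subst emeasure_density) auto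
  finally have "0 < emeasure SN {a<..b}"
    using cpos assms by (metis diff_gt_0_iff_gt ennreal_less_zero_iff mult_pos_pos order_less_le_trans)
  then have "0 < measure SN {a<..b}"
    by (simp add: SN.emeasure_eq_measure)
  then show ?thesis unfolding Phi_cdf using SN.cdf_diff_eq[OF assms] by simp
qed

lemma Phi_mono: "a \<le> b \<Longrightarrow> Phi a \<le> Phi b"
  using Phi_strict by (cases "a = b") (auto intro: less_imp_le)

lemma Phi_inv: assumes "0 < p" "p < 1" shows "Phi (Phi_inv p) = p"
proof -
  have top: "(Phi \<longlongrightarrow> 1) at_top" unfolding Phi_cdf by (rule SN.cdf_lim_at_top_prob)
  have bot: "(Phi \<longlongrightarrow> 0) at_bot" unfolding Phi_cdf by (rule SN.cdf_lim_at_bot)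
  obtain u where u: "Phi u > p"
    using order_tendstoD(1)[OF top assms(2)] by (auto simp: eventually_at_top_linorder)
  obtain l where l: "Phi l < p"
    using order_tendstoD(2)[OF bot assms(1)] by (auto simp: eventually_at_bot_linorder)
  have lu: "l \<le> u"
  proof (rule ccontr)
    assume "\<not> l \<le> u"
    then have "Phi u \<le> Phi l" using Phi_mono by simp
    then show False using l u by simp
  qed
  obtain t where t: "Phi t = p"
    proof -
    have "\<exists>x\<ge>l. x \<le> u \<and> Phi x = p" by (rule IVT) (use l u lu Phi_cont in auto)
    then show ?thesis using that by blast
  qed
  have uniq: "s = t" if "Phi s = p" for s
    using that t by (cases s t rule: linorder_cases) (auto dest: Phi_strict)
  have "(THE s. Phi s = p) = t" by (rule the_equality) (rule t, rule uniq)
  then show ?thesis unfolding Phi_inv_def using t by simp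
qed

lemma Phi_prob:
  assumes "prob_space M" and d: "distributed M lborel Y (\<lambda>x. ennreal (std_normal_density x))"
  shows "measure M {x\<in>space M. Y x \<le> t} = Phi t"
proof -
  have Ym: "Y \<in> measurable M lborel" using d by (simp add: distributed_def)
  have "measure M {x\<in>space M. Y x \<le> t} = measure M (Y -` {..t} \<inter> space M)"
    by (intro arg_cong[where f="measure M"]) auto
  also have "\<dots> = measure (distr M lborel Y) {..t}"
    by (rule measure_distr[symmetric]) (use Ym in auto)
  also have "\<dots> = Phi t"
    using d by (simp add: distributed_def Phi_def)
  finally show ?thesis .
qed

lemma GN_meas: "measurable (GN \<sigma>) M = measurable borel M"
  by (rule measurable_cong_sets) auto

lemma GN_std:
  assumes s: "0 < \<sigma>" and w: "w \<noteq> 0"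
  shows "distributed (GN \<sigma>) lborel (\<lambda>e::'a::euclidean_space. (e \<bullet> w) / (\<sigma> * norm w)) (\<lambda>x. ennreal (std_normal_density x))"
    and "distributed (GN \<sigma>) lborel (\<lambda>e::'a::euclidean_space. - ((e \<bullet> w) / (\<sigma> * norm w))) (\<lambda>x. ennreal (std_normal_density x))"
proof -
  interpret prob_space "GN \<sigma> :: 'a measure" by (rule GN_prob[OF s])
  have sp: "0 < \<sigma> * norm w" using s w by simp
  have d: "distributed (GN \<sigma>) lborel (\<lambda>e::'a. e \<bullet> w) (\<lambda>x. ennreal (normal_density 0 (\<sigma> * norm w) x))"
    unfolding GN_def gd_def by (rule L3[OF s w])
  show d1: "distributed (GN \<sigma>) lborel (\<lambda>e::'a. (e \<bullet> w) / (\<sigma> * norm w)) (\<lambda>x. ennreal (std_normal_density x))"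
    using d normal_standard_normal_convert[OF sp, of "\<lambda>e. e \<bullet> w" 0] by simp
  have "distributed (GN \<sigma>) lborel (\<lambda>e::'a. 0 + (-1) * ((e \<bullet> w) / (\<sigma> * norm w)))
          (\<lambda>x. ennreal (normal_density (0 + (-1) * 0) (\<bar>-1\<bar> * 1) x))"
    by (rule normal_density_affine[OF d1]) auto
  then show "distributed (GN \<sigma>) lborel (\<lambda>e::'a. - ((e \<bullet> w) / (\<sigma> * norm w))) (\<lambda>x. ennreal (std_normal_density x))"
    by simp
qed

lemma NP_core:
  fixes F1 F2 r :: "'a \<Rightarrow> real"
  assumes P: "prob_space M"
    and m1[measurable]: "F1 \<in> borel_measurable M" and m2[measurable]: "F2 \<in> borel_measurable M"
    and b1: "\<And>x. 0 \<le> F1 x \<and> F1 x \<le> 1" and b2: "\<And>x. 0 \<le> F2 x \<and> F2 x \<le> 1"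
    and ri: "integrable M r" and c: "0 \<le> c"
    and pw: "\<And>x. 0 \<le> (F1 x - F2 x) * (r x - c)"
    and le: "(\<integral>x. F2 x \<partial>M) \<le> (\<integral>x. F1 x \<partial>M)"
  shows "(\<integral>x. F2 x * r x \<partial>M) \<le> (\<integral>x. F1 x * r x \<partial>M)"
proof -
  interpret prob_space M by (rule P)
  have rm[measurable]: "r \<in> borel_measurable M" using ri by (rule borel_measurable_integrable)
  have i1: "integrable M F1"
    by (rule integrable_const_bound[where B=1]) (use b1 in auto)
  have i2: "integrable M F2"
    by (rule integrable_const_bound[where B=1]) (use b2 in auto)
  have i1r: "integrable M (\<lambda>x. F1 x * r x)"
    by (rule Bochner_Integration.integrable_bound[OF ri]) (use b1 in \<open>auto simp: abs_mult intro!: mult_left_le_one_le\<close>)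
  have i2r: "integrable M (\<lambda>x. F2 x * r x)"
    by (rule Bochner_Integration.integrable_bound[OF ri]) (use b2 in \<open>auto simp: abs_mult intro!: mult_left_le_one_le\<close>)
  have "0 \<le> (\<integral>x. (F1 x - F2 x) * (r x - c) \<partial>M)"
    by (rule integral_nonneg_AE) (use pw in auto)
  also have "(\<integral>x. (F1 x - F2 x) * (r x - c) \<partial>M)
      = (\<integral>x. F1 x * r x \<partial>M) - (\<integral>x. F2 x * r x \<partial>M) - c * ((\<integral>x. F1 x \<partial>M) - (\<integral>x. F2 x \<partial>M))"
  proof -
    have "(\<lambda>x. (F1 x - F2 x) * (r x - c)) = (\<lambda>x. (F1 x * r x - F2 x * r x) - c * (F1 x - F2 x))"
      by (auto simp: algebra_simps)
    then show ?thesis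
      using i1 i2 i1r i2r by (simp add: Bochner_Integration.integral_diff)
  qed
  finally show ?thesis using c le by (smt (verit) mult_nonneg_nonneg)
qed

definition rr :: "real \<Rightarrow> 'a::euclidean_space \<Rightarrow> 'a \<Rightarrow> real" where
  "rr \<sigma> w e = exp ((e \<bullet> w) / \<sigma>\<^sup>2 - (norm w)\<^sup>2 / (2 * \<sigma>\<^sup>2))"

lemma rr_integrable:
  assumes s: "0 < \<sigma>"
  shows "integrable (GN \<sigma>) (rr \<sigma> w)"
proof -
  interpret prob_space "GN \<sigma> :: 'a measure" by (rule GN_prob[OF s])
  have "(\<integral>\<^sup>+ e. ennreal (rr \<sigma> w e) \<partial>GN \<sigma>) = (\<integral>\<^sup>+ e. (\<lambda>_. 1::ennreal) e * ennreal (rr \<sigma> w e) \<partial>GN \<sigma>)"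
    by simp
  also have "\<dots> = (\<integral>\<^sup>+ e. (\<lambda>_. 1::ennreal) (e + w) \<partial>GN \<sigma>)"
    unfolding rr_def by (rule GN_shift[OF s, symmetric]) simp
  also have "\<dots> = ennreal 1" using emeasure_space_1 by simp
  moreover have "rr \<sigma> w \<in> borel_measurable (GN \<sigma>)" unfolding GN_meas rr_def by measurable
  ultimately show ?thesis
    by (intro integrableI_nn_integral_finite[where x=1]) (auto simp: rr_def)
qed

lemma GN_shift_int:
  assumes s: "0 < \<sigma>" and Fm[measurable]: "F \<in> borel_measurable borel" and b: "\<And>x. 0 \<le> F x \<and> F x \<le> 1"
  shows "(\<integral>e. F (e + w) \<partial>GN \<sigma>) = (\<integral>e. F e * rr \<sigma> w e \<partial>(GN \<sigma> :: 'a::euclidean_space measure))"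
proof -
  interpret prob_space "GN \<sigma> :: 'a measure" by (rule GN_prob[OF s])
  have ri: "integrable (GN \<sigma>) (rr \<sigma> w)" by (rule rr_integrable[OF s])
  have rm[measurable]: "rr \<sigma> w \<in> borel_measurable borel" unfolding rr_def by measurable
  have "(\<lambda>e. F (e + w)) \<in> borel_measurable borel" by measurable
  then have i1: "integrable (GN \<sigma>) (\<lambda>e. F (e + w))"
    by (intro integrable_const_bound[where B=1]) (use b in \<open>auto simp: GN_meas\<close>)
  have "(\<lambda>e. F e * rr \<sigma> w e) \<in> borel_measurable (GN \<sigma>)" unfolding GN_meas by measurable
  then have i2: "integrable (GN \<sigma>) (\<lambda>e. F e * rr \<sigma> w e)"
    by (rule Bochner_Integration.integrable_bound[OF ri]) (use b in \<open>auto simp: abs_mult rr_def intro!: mult_left_le_one_le\<close>)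
  have "ennreal (\<integral>e. F (e + w) \<partial>GN \<sigma>) = (\<integral>\<^sup>+ e. ennreal (F (e + w)) \<partial>GN \<sigma>)"
    by (rule nn_integral_eq_integral[symmetric]) (use i1 b in auto)
  also have "\<dots> = (\<integral>\<^sup>+ e. ennreal (F e) * ennreal (rr \<sigma> w e) \<partial>GN \<sigma>)"
    unfolding rr_def by (rule GN_shift[OF s]) measurable
  also have "\<dots> = (\<integral>\<^sup>+ e. ennreal (F e * rr \<sigma> w e) \<partial>GN \<sigma>)"
    by (intro nn_integral_cong) (simp add: ennreal_mult' b rr_def)
  also have "\<dots> = ennreal (\<integral>e. F e * rr \<sigma> w e \<partial>GN \<sigma>)"
    by (rule nn_integral_eq_integral) (use i2 b in \<open>auto simp: rr_def\<close>)
  finally show ?thesis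
    using b by (subst (asm) ennreal_inj) (auto intro!: integral_nonneg_AE simp: rr_def)
qed

lemma NP_lower:
  fixes f :: "'a::euclidean_space \<Rightarrow> real"
  assumes s: "0 < \<sigma>" and fm[measurable]: "f \<in> borel_measurable borel"
    and f01: "\<And>x. 0 \<le> f x \<and> f x \<le> 1"
    and hA: "Phi a \<le> (\<integral>e. f e \<partial>GN \<sigma>)"
  shows "Phi (a - norm w / \<sigma>) \<le> (\<integral>e. f (e + w) \<partial>GN \<sigma>)"
proof (cases "w = 0")
  case True then show ?thesis using hA by simp
next
  case False
  interpret prob_space "GN \<sigma> :: 'a measure" by (rule GN_prob[OF s])
  define sw where "sw = \<sigma> * norm w"
  have swp: "0 < sw" using s False by (simp add: sw_def)
  define Z where "Z = (\<lambda>e::'a. (e \<bullet> w) / sw)"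
  have Zd: "distributed (GN \<sigma>) lborel Z (\<lambda>x. ennreal (std_normal_density x))"
    unfolding Z_def sw_def by (rule GN_std(1)[OF s False])
  have Zm[measurable]: "Z \<in> borel_measurable borel" unfolding Z_def by measurable
  define g where "g = (\<lambda>e. indicator {e. Z e \<le> a} e :: real)"
  have gm[measurable]: "g \<in> borel_measurable borel" unfolding g_def by measurable
  have g01: "\<And>x. 0 \<le> g x \<and> g x \<le> 1" unfolding g_def by (simp split: split_indicator)
  define c where "c = exp (a * sw / \<sigma>\<^sup>2 - (norm w)\<^sup>2 / (2 * \<sigma>\<^sup>2))"
  have Zshift: "Z (e + w) = Z e + norm w / \<sigma>" for e
  proof -
    have "Z (e + w) = Z e + (w \<bullet> w) / sw" unfolding Z_def by (simp add: inner_add_left add_divide_distrib)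
    also have "(w \<bullet> w) / sw = norm w / \<sigma>"
      using s False by (simp add: sw_def dot_square_norm power2_eq_square)
    finally show ?thesis .
  qed
  have intg: "(\<integral>e. g e \<partial>GN \<sigma>) = Phi a"
  proof -
    have "(\<integral>e. g e \<partial>GN \<sigma>) = measure (GN \<sigma>) {e. Z e \<le> a}"
      proof -
      have "{e. Z e \<le> a} \<in> sets (GN \<sigma>)" unfolding GN_sets by measurable
      then show ?thesis unfolding g_def by simp
    qed
    also have "\<dots> = Phi a" using Phi_prob[OF prob_space_axioms Zd, of a] by simp
    finally show ?thesis .
  qed
  have intgs: "(\<integral>e. g (e + w) \<partial>GN \<sigma>) = Phi (a - norm w / \<sigma>)"
  proof -
    have "(\<lambda>e. g (e + w)) = (\<lambda>e. indicator {e. Z e \<le> a - norm w / \<sigma>} e)"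
      unfolding g_def by (auto simp: Zshift split: split_indicator)
    then have "(\<integral>e. g (e + w) \<partial>GN \<sigma>) = measure (GN \<sigma>) {e. Z e \<le> a - norm w / \<sigma>}"
      by simp
    also have "\<dots> = Phi (a - norm w / \<sigma>)" using Phi_prob[OF prob_space_axioms Zd, of "a - norm w / \<sigma>"] by simp
    finally show ?thesis .
  qed
  have pw: "0 \<le> (f e - g e) * (rr \<sigma> w e - c)" for e
  proof -
    have iff: "Z e \<le> a \<longleftrightarrow> rr \<sigma> w e \<le> c"
    proof -
      have "Z e \<le> a \<longleftrightarrow> e \<bullet> w \<le> a * sw" unfolding Z_def using swp by (simp add: divide_le_eq)
      also have "\<dots> \<longleftrightarrow> (e \<bullet> w) / \<sigma>\<^sup>2 \<le> a * sw / \<sigma>\<^sup>2" using s by (simp add: divide_le_cancel)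
      also have "\<dots> \<longleftrightarrow> rr \<sigma> w e \<le> c" unfolding rr_def c_def by simp
      finally show ?thesis .
    qed
    show ?thesis
    proof (cases "Z e \<le> a")
      case True
      then have "g e = 1" "rr \<sigma> w e \<le> c" using iff by (auto simp: g_def)
      then show ?thesis using f01[of e] by (simp add: mult_nonpos_nonpos)
    next
      case False
      then have "g e = 0" "c < rr \<sigma> w e" using iff by (auto simp: g_def)
      then show ?thesis using f01[of e] by simp
    qed
  qed
  have "(\<integral>e. g e * rr \<sigma> w e \<partial>GN \<sigma>) \<le> (\<integral>e. f e * rr \<sigma> w e \<partial>GN \<sigma>)"
    by (rule NP_core[OF prob_space_axioms _ _ f01 g01 rr_integrable[OF s] _ pw])
       (use hA intg in \<open>auto simp: GN_meas c_def\<close>)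
  then show ?thesis
    using GN_shift_int[OF s fm f01, of w] GN_shift_int[OF s gm g01, of w] intgs by simp
qed

lemma NP_upper:
  fixes f :: "'a::euclidean_space \<Rightarrow> real"
  assumes s: "0 < \<sigma>" and fm[measurable]: "f \<in> borel_measurable borel"
    and f01: "\<And>x. 0 \<le> f x \<and> f x \<le> 1"
    and hB: "(\<integral>e. f e \<partial>GN \<sigma>) \<le> Phi b"
  shows "(\<integral>e. f (e + w) \<partial>GN \<sigma>) \<le> Phi (b + norm w / \<sigma>)"
proof (cases "w = 0")
  case True then show ?thesis using hB by simp
next
  case False
  interpret prob_space "GN \<sigma> :: 'a measure" by (rule GN_prob[OF s])
  define sw where "sw = \<sigma> * norm w"
  have swp: "0 < sw" using s False by (simp add: sw_def)
  define Z where "Z = (\<lambda>e::'a. - ((e \<bullet> w) / sw))"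
  have Zd: "distributed (GN \<sigma>) lborel Z (\<lambda>x. ennreal (std_normal_density x))"
    unfolding Z_def sw_def by (rule GN_std(2)[OF s False])
  have Zm[measurable]: "Z \<in> borel_measurable borel" unfolding Z_def by measurable
  define g where "g = (\<lambda>e. indicator {e. Z e \<le> b} e :: real)"
  have gm[measurable]: "g \<in> borel_measurable borel" unfolding g_def by measurable
  have g01: "\<And>x. 0 \<le> g x \<and> g x \<le> 1" unfolding g_def by (simp split: split_indicator)
  define c where "c = exp (- b * sw / \<sigma>\<^sup>2 - (norm w)\<^sup>2 / (2 * \<sigma>\<^sup>2))"
  have Zshift: "Z (e + w) = Z e - norm w / \<sigma>" for e
  proof -
    have "Z (e + w) = Z e - (w \<bullet> w) / sw" unfolding Z_def by (simp add: inner_add_left add_divide_distrib)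
    also have "(w \<bullet> w) / sw = norm w / \<sigma>"
      using s False by (simp add: sw_def dot_square_norm power2_eq_square)
    finally show ?thesis .
  qed
  have intg: "(\<integral>e. g e \<partial>GN \<sigma>) = Phi b"
  proof -
    have "(\<integral>e. g e \<partial>GN \<sigma>) = measure (GN \<sigma>) {e. Z e \<le> b}"
      proof -
      have "{e. Z e \<le> b} \<in> sets (GN \<sigma>)" unfolding GN_sets by measurable
      then show ?thesis unfolding g_def by simp
    qed
    also have "\<dots> = Phi b" using Phi_prob[OF prob_space_axioms Zd, of b] by simp
    finally show ?thesis .
  qed
  have intgs: "(\<integral>e. g (e + w) \<partial>GN \<sigma>) = Phi (b + norm w / \<sigma>)"
  proof -
    have "(\<lambda>e. g (e + w)) = (\<lambda>e. indicator {e. Z e \<le> b + norm w / \<sigma>} e)"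
      unfolding g_def by (auto simp: Zshift split: split_indicator)
    then have "(\<integral>e. g (e + w) \<partial>GN \<sigma>) = measure (GN \<sigma>) {e. Z e \<le> b + norm w / \<sigma>}"
      by simp
    also have "\<dots> = Phi (b + norm w / \<sigma>)" using Phi_prob[OF prob_space_axioms Zd, of "b + norm w / \<sigma>"] by simp
    finally show ?thesis .
  qed
  have pw: "0 \<le> (g e - f e) * (rr \<sigma> w e - c)" for e
  proof -
    have iff: "Z e \<le> b \<longleftrightarrow> c \<le> rr \<sigma> w e"
    proof -
      have "Z e \<le> b \<longleftrightarrow> - b \<le> (e \<bullet> w) / sw" unfolding Z_def by linarith
      also have "\<dots> \<longleftrightarrow> - b * sw \<le> e \<bullet> w" using swp by (simp add: le_divide_eq)
      also have "\<dots> \<longleftrightarrow> - b * sw / \<sigma>\<^sup>2 \<le> (e \<bullet> w) / \<sigma>\<^sup>2" using s by (simp add: field_simps)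
      also have "\<dots> \<longleftrightarrow> c \<le> rr \<sigma> w e" unfolding rr_def c_def by simp
      finally show ?thesis .
    qed
    show ?thesis
    proof (cases "Z e \<le> b")
      case True
      then have "g e = 1" "c \<le> rr \<sigma> w e" using iff by (auto simp: g_def)
      then show ?thesis using f01[of e] by simp
    next
      case False
      then have "g e = 0" "rr \<sigma> w e < c" using iff by (auto simp: g_def)
      then show ?thesis using f01[of e] by (simp add: mult_nonneg_nonpos)
    qed
  qed
  have "(\<integral>e. f e * rr \<sigma> w e \<partial>GN \<sigma>) \<le> (\<integral>e. g e * rr \<sigma> w e \<partial>GN \<sigma>)"
    by (rule NP_core[OF prob_space_axioms _ _ g01 f01 rr_integrable[OF s] _ pw])
       (use hB intg in \<open>auto simp: GN_meas c_def\<close>)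
  then show ?thesis
    using GN_shift_int[OF s fm f01, of w] GN_shift_int[OF s gm g01, of w] intgs by simp
qed

definition qm :: "real \<times> (real^3) \<Rightarrow> real \<times> (real^3) \<Rightarrow> real \<times> (real^3)" where
  "qm x y = (fst x * fst y - snd x \<bullet> snd y, fst x *\<^sub>R snd y + fst y *\<^sub>R snd x + cross3 (snd x) (snd y))"

definition cj :: "real \<times> (real^3) \<Rightarrow> real \<times> (real^3)" where
  "cj x = (fst x, - snd x)"

definition quat :: "real \<Rightarrow> real^3 \<Rightarrow> real \<times> (real^3)" where
  "quat \<theta> k = (cos (\<theta>/2), sin (\<theta>/2) *\<^sub>R k)"

lemma norm_sq_prod: "(norm (x :: real \<times> (real^3)))\<^sup>2 = (fst x)\<^sup>2 + (norm (snd x))\<^sup>2"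
  by (cases x) (simp add: norm_prod_def)

lemma norm_sq3: "(norm (v :: real^3))\<^sup>2 = (v$1)\<^sup>2 + (v$2)\<^sup>2 + (v$3)\<^sup>2"
  unfolding dot_square_norm[symmetric] by (simp add: inner_vec_def sum_3 power2_eq_square)

lemma cross_diff_l: "cross3 (x - y) z = cross3 x z - cross3 y z"
  by (simp add: cross3_simps)
lemma cross_diff_r: "cross3 x (y - z) = cross3 x y - cross3 x z"
  by (simp add: cross3_simps)

lemma qm_norm_sq: "(norm (qm x y))\<^sup>2 = (norm x)\<^sup>2 * (norm y)\<^sup>2"
proof -
  obtain a u b v where xy: "x = (a, u)" "y = (b, v)" by (cases x, cases y) auto
  show ?thesis unfolding xy norm_sq_prod qm_def norm_sq3
    by (simp add: cross3_def inner_vec_def sum_3 vector_def) algebra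
qed

lemma qm_norm: "norm (qm x y) = norm x * norm y"
proof -
  have "(norm (qm x y))\<^sup>2 = (norm x * norm y)\<^sup>2" by (simp add: qm_norm_sq power_mult_distrib)
  then show ?thesis by (simp add: power2_eq_iff_nonneg)
qed

lemma cj_norm: "norm (cj x) = norm x"
  by (cases x) (simp add: cj_def norm_prod_def)

lemma qm_diff_left: "qm (x - y) z = qm x z - qm y z"
  by (cases x, cases y, cases z) (simp add: qm_def algebra_simps inner_diff_left cross_diff_l)

lemma qm_diff_right: "qm x (y - z) = qm x y - qm x z"
  by (cases x, cases y, cases z) (simp add: qm_def algebra_simps inner_diff_right cross_diff_r)

lemma cj_diff: "cj (x - y) = cj x - cj y"
  by (cases x, cases y) (simp add: cj_def)

lemma Rot_app: "Rot k \<theta> *v p = cos \<theta> *\<^sub>R p + sin \<theta> *\<^sub>R cross3 k p + ((1 - cos \<theta>) * (k \<bullet> p)) *\<^sub>R k"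
proof -
  have "linear (\<lambda>p. cos \<theta> *\<^sub>R p + sin \<theta> *\<^sub>R cross3 k p + ((1 - cos \<theta>) * (k \<bullet> p)) *\<^sub>R k)"
    by (rule linearI) (simp_all add: cross_add_right cross_mult_right inner_add_right algebra_simps scaleR_add_left)
  then show ?thesis unfolding Rot_def by (intro matrix_works) (simp add: linear_matrix_vector_mul_eq)
qed

lemma Rot_quat:
  assumes k: "norm k = 1"
  shows "Rot k \<theta> *v p = snd (qm (qm (quat \<theta> k) (0, p)) (cj (quat \<theta> k)))"
proof -
  define t where "t = \<theta> / 2"
  have th: "\<theta> = 2 * t" by (simp add: t_def)
  have c2: "cos \<theta> = (cos t)\<^sup>2 - (sin t)\<^sup>2" unfolding th by (simp add: cos_double)
  have s2: "sin \<theta> = 2 * sin t * cos t" unfolding th by (simp add: sin_double)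
  have k1: "(k$1)\<^sup>2 + (k$2)\<^sup>2 + (k$3)\<^sup>2 = 1" using k norm_sq3[of k] by simp
  show ?thesis
    unfolding Rot_app quat_def qm_def cj_def c2 s2 t_def[symmetric]
    apply (simp add: vec_eq_iff forall_3 cross3_def inner_vec_def sum_3 vector_def)
    apply (insert k1 sin_cos_squared_add[of t])
    apply (intro conjI)
      apply algebra+
    done
qed

lemma quat_norm: "norm k = 1 \<Longrightarrow> norm (quat \<theta> k) = 1"
  by (simp add: quat_def norm_prod_def)

lemma Rot_diff:
  assumes k: "norm k = 1" and k': "norm k' = 1"
  shows "norm (Rot k \<theta> *v p - Rot k' \<theta>' *v p) \<le> 2 * norm (quat \<theta> k - quat \<theta>' k') * norm p"
proof -
  define q1 where "q1 = quat \<theta> k"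
  define q2 where "q2 = quat \<theta>' k'"
  define P where "P = ((0::real), p)"
  have n1: "norm q1 = 1" unfolding q1_def by (rule quat_norm[OF k])
  have n2: "norm q2 = 1" unfolding q2_def by (rule quat_norm[OF k'])
  have nP: "norm P = norm p" by (simp add: P_def norm_prod_def)
  have eq: "qm (qm q1 P) (cj q1) - qm (qm q2 P) (cj q2)
      = qm (qm (q1 - q2) P) (cj q1) + qm (qm q2 P) (cj (q1 - q2))"
    by (simp add: qm_diff_left qm_diff_right cj_diff)
  have "Rot k \<theta> *v p - Rot k' \<theta>' *v p = snd (qm (qm q1 P) (cj q1) - qm (qm q2 P) (cj q2))"
    unfolding Rot_quat[OF k] Rot_quat[OF k'] q1_def q2_def P_def by simp
  also have "norm \<dots> \<le> norm (qm (qm q1 P) (cj q1) - qm (qm q2 P) (cj q2))"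
    by (metis norm_snd_le prod.collapse)
  also have "\<dots> \<le> norm (qm (qm (q1 - q2) P) (cj q1)) + norm (qm (qm q2 P) (cj (q1 - q2)))"
    unfolding eq by (rule norm_triangle_ineq)
  also have "\<dots> = 2 * norm (q1 - q2) * norm p"
    by (simp add: qm_norm cj_norm n1 n2 nP)
  finally show ?thesis by (simp add: q1_def q2_def)
qed

lemma one_minus_cos_le: "1 - cos (x::real) \<le> x\<^sup>2 / 2"
proof -
  have "cos x = 1 - 2 * (sin (x/2))\<^sup>2" using cos_double_sin[of "x/2"] by simp
  moreover have "(sin (x/2))\<^sup>2 \<le> (x/2)\<^sup>2"
    using abs_sin_x_le_abs_x[of "x/2"] by (metis abs_ge_zero power2_abs power_mono)
  ultimately show ?thesis by (simp add: power_divide)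
qed

lemma quat_dist:
  assumes k: "norm k = 1" and k': "norm k' = 1"
    and th: "0 \<le> \<theta>" "\<theta> \<le> R" and th': "0 \<le> \<theta>'" "\<theta>' \<le> R"
    and d: "\<bar>\<theta> - \<theta>'\<bar> \<le> \<delta>" and a: "vangle k k' \<le> \<eta>"
  shows "(norm (quat \<theta> k - quat \<theta>' k'))\<^sup>2 \<le> \<delta>\<^sup>2 / 4 + \<eta>\<^sup>2 * R\<^sup>2 / 4"
proof -
  define c where "c = cos (\<theta>/2)" define c' where "c' = cos (\<theta>'/2)"
  define s where "s = sin (\<theta>/2)" define s' where "s' = sin (\<theta>'/2)"
  have kk: "\<bar>k \<bullet> k'\<bar> \<le> 1" using Cauchy_Schwarz_ineq2[of k k'] k k' by simp
  have "(norm (quat \<theta> k - quat \<theta>' k'))\<^sup>2 = (c - c')\<^sup>2 + (norm (s *\<^sub>R k - s' *\<^sub>R k'))\<^sup>2"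
    by (simp add: quat_def norm_prod_def c_def c'_def s_def s'_def)
  also have "(norm (s *\<^sub>R k - s' *\<^sub>R k'))\<^sup>2 = s\<^sup>2 + s'\<^sup>2 - 2 * s * s' * (k \<bullet> k')"
  proof -
    have kk1: "k \<bullet> k = 1" "k' \<bullet> k' = 1" using k k' by (simp_all add: dot_square_norm)
    have "(norm (s *\<^sub>R k - s' *\<^sub>R k'))\<^sup>2 = (s *\<^sub>R k - s' *\<^sub>R k') \<bullet> (s *\<^sub>R k - s' *\<^sub>R k')"
      by (simp only: dot_square_norm)
    also have "\<dots> = s * s * (k \<bullet> k) + s' * s' * (k' \<bullet> k') - 2 * s * s' * (k \<bullet> k')"
      by (simp add: inner_diff_left inner_diff_right inner_commute[of k' k] algebra_simps)
    finally show ?thesis using kk1 by (simp add: power2_eq_square)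
  qed
  also have "(c - c')\<^sup>2 + (s\<^sup>2 + s'\<^sup>2 - 2 * s * s' * (k \<bullet> k'))
      = (2 - 2 * cos ((\<theta> - \<theta>') / 2)) + 2 * (s * s') * (1 - k \<bullet> k')"
  proof -
    have "cos ((\<theta> - \<theta>') / 2) = c * c' + s * s'"
      unfolding c_def c'_def s_def s'_def using cos_diff[of "\<theta>/2" "\<theta>'/2"] by (simp add: diff_divide_distrib)
    moreover have "c\<^sup>2 + s\<^sup>2 = 1" "c'\<^sup>2 + s'\<^sup>2 = 1" by (simp_all add: c_def s_def c'_def s'_def)
    ultimately show ?thesis by (simp add: power2_eq_square algebra_simps)
  qed
  also have "\<dots> \<le> \<delta>\<^sup>2 / 4 + \<eta>\<^sup>2 * R\<^sup>2 / 4"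
  proof -
    have "2 - 2 * cos ((\<theta> - \<theta>') / 2) \<le> ((\<theta> - \<theta>') / 2)\<^sup>2"
      using one_minus_cos_le[of "(\<theta> - \<theta>') / 2"] by simp
    also have "\<dots> \<le> \<delta>\<^sup>2 / 4"
    proof -
      have "(\<theta> - \<theta>')\<^sup>2 \<le> \<delta>\<^sup>2" using d by (metis abs_ge_zero power2_abs power_mono)
      then show ?thesis by (simp add: power_divide)
    qed
    finally have A: "2 - 2 * cos ((\<theta> - \<theta>') / 2) \<le> \<delta>\<^sup>2 / 4" .
    have ss: "\<bar>s * s'\<bar> \<le> R\<^sup>2 / 4"
    proof -
      have "\<bar>s\<bar> \<le> R / 2" using abs_sin_x_le_abs_x[of "\<theta>/2"] th unfolding s_def by simp
      moreover have "\<bar>s'\<bar> \<le> R / 2" using abs_sin_x_le_abs_x[of "\<theta>'/2"] th' unfolding s'_def by simp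
      ultimately have "\<bar>s\<bar> * \<bar>s'\<bar> \<le> (R/2) * (R/2)" by (intro mult_mono) auto
      then show ?thesis by (simp add: abs_mult power2_eq_square)
    qed
    have kb: "0 \<le> 1 - k \<bullet> k'" "1 - k \<bullet> k' \<le> \<eta>\<^sup>2 / 2"
    proof -
      show "0 \<le> 1 - k \<bullet> k'" using kk by simp
      define \<alpha> where "\<alpha> = arccos (k \<bullet> k')"
      have ca: "cos \<alpha> = k \<bullet> k'" unfolding \<alpha>_def using kk by simp
      have a0: "0 \<le> \<alpha>" unfolding \<alpha>_def using kk by (simp add: arccos_lbound)
      have "\<alpha> \<le> \<eta>" using a unfolding \<alpha>_def vangle_def .
      then have "\<alpha>\<^sup>2 \<le> \<eta>\<^sup>2" using a0 by (simp add: power_mono)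
      then show "1 - k \<bullet> k' \<le> \<eta>\<^sup>2 / 2" using one_minus_cos_le[of \<alpha>] ca by simp
    qed
    have "2 * (s * s') * (1 - k \<bullet> k') \<le> 2 * (R\<^sup>2 / 4) * (\<eta>\<^sup>2 / 2)"
    proof -
      have "s * s' * (1 - k \<bullet> k') \<le> \<bar>s * s'\<bar> * (1 - k \<bullet> k')"
        using kb(1) by (intro mult_right_mono) auto
      also have "\<dots> \<le> (R\<^sup>2 / 4) * (\<eta>\<^sup>2 / 2)"
        using ss kb by (intro mult_mono) auto
      finally show ?thesis by simp
    qed
    with A show ?thesis by (simp add: power2_eq_square algebra_simps)
  qed
  finally show ?thesis .
qed

lemma phi_diff:
  assumes k: "norm k = 1" and k': "norm k' = 1"
  shows "norm (phi_R x k \<theta> - phi_R x k' \<theta>') \<le> 2 * norm (quat \<theta> k - quat \<theta>' k') * norm (x :: real^3^'n)"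
proof -
  define d where "d = 2 * norm (quat \<theta> k - quat \<theta>' k')"
  have d0: "0 \<le> d" by (simp add: d_def)
  have comp: "norm ((phi_R x k \<theta> - phi_R x k' \<theta>') $ i) \<le> d * norm (x $ i)" for i
    unfolding phi_R_def d_def using Rot_diff[OF k k', of \<theta> "x $ i" \<theta>'] by simp
  have "(norm (phi_R x k \<theta> - phi_R x k' \<theta>'))\<^sup>2 = (\<Sum>i\<in>UNIV. (norm ((phi_R x k \<theta> - phi_R x k' \<theta>') $ i))\<^sup>2)"
    unfolding norm_vec_def by (simp add: L2_set_def sum_nonneg)
  also have "\<dots> \<le> (\<Sum>i\<in>UNIV. (d * norm (x $ i))\<^sup>2)"
    by (intro sum_mono power_mono comp) auto
  also have "\<dots> = d\<^sup>2 * (\<Sum>i\<in>UNIV. (norm (x $ i))\<^sup>2)"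
    by (simp add: power_mult_distrib sum_distrib_left)
  also have "(\<Sum>i\<in>UNIV. (norm (x $ i))\<^sup>2) = (norm x)\<^sup>2"
    unfolding norm_vec_def by (simp add: L2_set_def sum_nonneg)
  finally have "(norm (phi_R x k \<theta> - phi_R x k' \<theta>'))\<^sup>2 \<le> (d * norm x)\<^sup>2"
    by (simp add: power_mult_distrib)
  then have "norm (phi_R x k \<theta> - phi_R x k' \<theta>') \<le> d * norm x"
    by (rule power2_le_imp_le) (simp add: d0)
  then show ?thesis by (simp add: d_def)
qed

lemma Basis_v3: "(Basis :: (real^3) set) = range (\<lambda>c. axis c 1)"
  unfolding Basis_vec_def Basis_real_def by blast

lemma Basis_vv: "(Basis :: (real^3^'n) set) = (\<lambda>(i,c). axis i (axis c 1)) ` UNIV"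
proof -
  have "(Basis :: (real^3^'n) set) = (\<Union>i. \<Union>u\<in>range (\<lambda>c. axis c (1::real)). {axis i u})"
    by (simp only: Basis_vec_def[where 'a="real^3"] Basis_v3)
  also have "\<dots> = (\<lambda>(i,c). axis i (axis c 1)) ` UNIV"
  proof (rule set_eqI, rule iffI)
    fix b :: "real^3^'n"
    assume "b \<in> (\<Union>i. \<Union>u\<in>range (\<lambda>c. axis c (1::real)). {axis i u})"
    then obtain i c where b: "b = axis i (axis c 1)" by blast
    show "b \<in> (\<lambda>(i,c). axis i (axis c 1)) ` UNIV"
      unfolding b by (rule image_eqI[of _ _ "(i,c)"]) simp_all
  next
    fix b :: "real^3^'n"
    assume "b \<in> (\<lambda>(i,c). axis i (axis c 1)) ` UNIV"
    then obtain i c where b: "b = axis i (axis c 1)" by (auto simp: image_iff)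
    show "b \<in> (\<Union>i. \<Union>u\<in>range (\<lambda>c. axis c (1::real)). {axis i u})"
      unfolding b by blast
  qed
  finally show ?thesis .
qed

lemma inj_vv: "inj (\<lambda>(i::'n, c::3). axis i (axis c (1::real)) :: real^3^'n)"
  unfolding inj_def
proof clarify
  fix i j :: 'n and c d :: 3
  assume "axis i (axis c (1::real)) = (axis j (axis d 1) :: real^3^'n)"
  then show "i = j \<and> c = d" by (simp add: axis_eq_axis)
qed

lemma prod_basis_vv:
  "(\<Prod>b\<in>(Basis::(real^3^'n) set). F b) = (\<Prod>i\<in>UNIV. \<Prod>c\<in>UNIV. F (axis i (axis c 1)))"
proof -
  have "(\<Prod>b\<in>(Basis::(real^3^'n) set). F b) = (\<Prod>ic\<in>UNIV. F ((\<lambda>(i,c). axis i (axis c 1)) ic))"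
    unfolding Basis_vv by (subst prod.reindex[OF inj_vv]) (simp add: o_def)
  also have "\<dots> = (\<Prod>i\<in>UNIV. \<Prod>c\<in>UNIV. F (axis i (axis c 1)))"
    unfolding prod.cartesian_product UNIV_Times_UNIV by (simp add: case_prod_beta')
  finally show ?thesis .
qed

lemma gauss_GN: "gauss_noise \<sigma> = (GN \<sigma> :: (real^3^'n) measure)"
proof -
  have "gd \<sigma> e = (\<Prod>i\<in>UNIV. \<Prod>c\<in>UNIV. normal_density 0 \<sigma> (e $ i $ c))" for e :: "real^3^'n"
    unfolding gd_def prod_basis_vv by (simp add: inner_axis)
  then show ?thesis unfolding gauss_noise_def GN_def by simp
qed

theorem mainTheorem3:
  fixes x :: "real^3^'n"
    and P :: "real^3^'n \<Rightarrow> nat \<Rightarrow> real"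
    and C M :: nat and yA :: nat
    and \<sigma> R \<eta> \<delta> :: real
    and kz :: "nat \<Rightarrow> real^3" and thz :: "nat \<Rightarrow> real"
    and pA pB :: "nat \<Rightarrow> real"
  assumes P: "base_classifier C P"
    and sigma: "\<sigma> > 0"
    and R: "0 < R" "R \<le> pi"
    and eta: "\<eta> \<ge> 0" and delta: "\<delta> \<ge> 0"
    and bound: "\<delta>\<^sup>2 / 4 + \<eta>\<^sup>2 * R\<^sup>2 / 8 \<le> 1"
    and grid: "\<forall>j\<in>{1..M}. kz j \<in> sphere 0 1 \<and> thz j \<in> {0..R}"
    and cover: "\<forall>k\<in>sphere 0 1. \<forall>\<theta>\<in>{0..R}. \<exists>j\<in>{1..M}.
                  vangle k (kz j) \<le> \<eta> \<and> \<bar>\<theta> - thz j\<bar> \<le> \<delta>"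
    and yA: "yA \<in> {1..C}"
    and probs: "\<forall>j\<in>{1..M}. pA j \<in> {0<..<1} \<and> pB j \<in> {0<..<1}"
    and pAj: "\<forall>j\<in>{1..M}. smoothed P \<sigma> (phi_R x (kz j) (thz j)) yA \<ge> pA j \<and> pA j > pB j"
    and pBj: "\<forall>j\<in>{1..M}. \<forall>y\<in>{1..C}. y \<noteq> yA \<longrightarrow>
                  smoothed P \<sigma> (phi_R x (kz j) (thz j)) y \<le> pB j"
    and margin: "\<forall>j\<in>{1..M}. \<sigma> / 2 * (Phi_inv (pA j) - Phi_inv (pB j))
                  > pi * sqrt (\<delta>\<^sup>2 / 4 + \<eta>\<^sup>2 * R\<^sup>2 / 8) * norm x"
  shows "\<forall>k\<in>sphere 0 1. \<forall>\<theta>\<in>{0..R}. \<forall>y\<in>{1..C}. y \<noteq> yA \<longrightarrow>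
           smoothed P \<sigma> (phi_R x k \<theta>) yA > smoothed P \<sigma> (phi_R x k \<theta>) y"
proof (intro ballI impI)
  fix k :: "real^3" and \<theta> :: real and y :: nat
  assume k: "k \<in> sphere 0 1" and th: "\<theta> \<in> {0..R}" and y: "y \<in> {1..C}" and yne: "y \<noteq> yA"
  obtain j where j: "j \<in> {1..M}" and va: "vangle k (kz j) \<le> \<eta>" and dj: "\<bar>\<theta> - thz j\<bar> \<le> \<delta>"
    using cover k th by blast
  have kj: "kz j \<in> sphere 0 1" and thj: "thz j \<in> {0..R}" using grid j by auto
  have nk: "norm k = 1" using k by simp
  have nkj: "norm (kz j) = 1" using kj by simp
  define xj where "xj = phi_R x (kz j) (thz j)"
  define x' where "x' = phi_R x k \<theta>"
  define w where "w = x' - xj"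
  define D where "D = pi * sqrt (\<delta>\<^sup>2 / 4 + \<eta>\<^sup>2 * R\<^sup>2 / 8) * norm x"
  have wD: "norm w \<le> D"
  proof -
    define nq where "nq = norm (quat \<theta> k - quat (thz j) (kz j))"
    have "norm w \<le> 2 * nq * norm x"
      unfolding w_def x'_def xj_def nq_def by (rule phi_diff[OF nk nkj])
    moreover have "2 * nq \<le> pi * sqrt (\<delta>\<^sup>2 / 4 + \<eta>\<^sup>2 * R\<^sup>2 / 8)"
    proof -
      have "nq\<^sup>2 \<le> \<delta>\<^sup>2 / 4 + \<eta>\<^sup>2 * R\<^sup>2 / 4"
        unfolding nq_def by (rule quat_dist[OF nk nkj _ _ _ _ dj va]) (use th thj in auto)
      then have "(2 * nq)\<^sup>2 \<le> 4 * (\<delta>\<^sup>2 / 4 + \<eta>\<^sup>2 * R\<^sup>2 / 4)"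
        by (simp add: power_mult_distrib)
      then have "2 * nq \<le> sqrt (4 * (\<delta>\<^sup>2 / 4 + \<eta>\<^sup>2 * R\<^sup>2 / 4))"
        by (rule real_le_rsqrt)
      also have "\<dots> \<le> sqrt (pi\<^sup>2 * (\<delta>\<^sup>2 / 4 + \<eta>\<^sup>2 * R\<^sup>2 / 8))"
      proof (rule real_sqrt_le_mono)
        have p9: "9 \<le> pi\<^sup>2"
        proof -
          have "3 * 3 \<le> pi * pi" using pi_gt3 by (intro mult_mono) auto
          then show ?thesis by (simp add: power2_eq_square)
        qed
        have a0: "0 \<le> \<delta>\<^sup>2 / 4" and b0: "0 \<le> \<eta>\<^sup>2 * R\<^sup>2 / 8" by auto
        have "4 * (\<delta>\<^sup>2 / 4 + \<eta>\<^sup>2 * R\<^sup>2 / 4) \<le> 9 * (\<delta>\<^sup>2 / 4 + \<eta>\<^sup>2 * R\<^sup>2 / 8)"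
          using a0 b0 by (simp; linarith)
        also have "\<dots> \<le> pi\<^sup>2 * (\<delta>\<^sup>2 / 4 + \<eta>\<^sup>2 * R\<^sup>2 / 8)"
          using p9 a0 b0 by (intro mult_right_mono) auto
        finally show "4 * (\<delta>\<^sup>2 / 4 + \<eta>\<^sup>2 * R\<^sup>2 / 4) \<le> pi\<^sup>2 * (\<delta>\<^sup>2 / 4 + \<eta>\<^sup>2 * R\<^sup>2 / 8)" .
      qed
      also have "\<dots> = pi * sqrt (\<delta>\<^sup>2 / 4 + \<eta>\<^sup>2 * R\<^sup>2 / 8)"
        by (simp add: real_sqrt_mult)
      finally show ?thesis .
    qed
    ultimately show ?thesis unfolding D_def
      by (smt (verit, best) mult_right_mono norm_ge_zero)
  qed
  have pj: "pA j \<in> {0<..<1}" "pB j \<in> {0<..<1}" using probs j by auto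
  define a where "a = Phi_inv (pA j)"
  define b where "b = Phi_inv (pB j)"
  have Pa: "Phi a = pA j" unfolding a_def using pj by (intro Phi_inv) auto
  have Pb: "Phi b = pB j" unfolding b_def using pj by (intro Phi_inv) auto
  have marg: "D < \<sigma> / 2 * (a - b)" using margin j unfolding D_def a_def b_def by auto
  have Pm: "\<And>y. (\<lambda>z. P z y) \<in> borel_measurable borel" using P by (simp add: base_classifier_def)
  have P01: "0 \<le> P z y' \<and> P z y' \<le> 1" for z y'
  proof -
    have nn: "\<forall>y. 0 \<le> P z y" and out: "\<forall>y. y \<notin> {1..C} \<longrightarrow> P z y = 0" and s1: "(\<Sum>y\<in>{1..C}. P z y) = 1"
      using P by (auto simp: base_classifier_def)
    show ?thesis
    proof (cases "y' \<in> {1..C}")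
      case True
      have "P z y' \<le> (\<Sum>y\<in>{1..C}. P z y)"
        by (rule member_le_sum) (use True nn in auto)
      then show ?thesis using s1 nn by auto
    next
      case False then show ?thesis using out by auto
    qed
  qed
  define fA where "fA = (\<lambda>e. P (xj + e) yA)"
  define fy where "fy = (\<lambda>e. P (xj + e) y)"
  have fAm: "fA \<in> borel_measurable borel"
    unfolding fA_def using measurable_compose[OF _ Pm[of yA], of "\<lambda>e. xj + e" borel] by simp
  have fym: "fy \<in> borel_measurable borel"
    unfolding fy_def using measurable_compose[OF _ Pm[of y], of "\<lambda>e. xj + e" borel] by simp
  have fA01: "\<And>e. 0 \<le> fA e \<and> fA e \<le> 1" unfolding fA_def using P01 by auto
  have fy01: "\<And>e. 0 \<le> fy e \<and> fy e \<le> 1" unfolding fy_def using P01 by auto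
  have sm: "smoothed P \<sigma> xj y' = (\<integral>e. P (xj + e) y' \<partial>GN \<sigma>)" for y'
    unfolding smoothed_def gauss_GN ..
  have sm': "smoothed P \<sigma> x' y' = (\<integral>e. P (xj + (e + w)) y' \<partial>GN \<sigma>)" for y'
  proof -
    have eq: "(\<lambda>e. P (x' + e) y') = (\<lambda>e. P (xj + (e + w)) y')"
      unfolding w_def by (simp add: algebra_simps)
    show ?thesis unfolding smoothed_def gauss_GN eq ..
  qed
  have hA: "Phi a \<le> (\<integral>e. fA e \<partial>GN \<sigma>)"
  proof -
    have "pA j \<le> smoothed P \<sigma> xj yA" using pAj j unfolding xj_def by blast
    then show ?thesis using Pa sm[of yA] unfolding fA_def by simp
  qed
  have hB: "(\<integral>e. fy e \<partial>GN \<sigma>) \<le> Phi b"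
  proof -
    have "smoothed P \<sigma> xj y \<le> pB j" using pBj j y yne unfolding xj_def by blast
    then show ?thesis using Pb sm[of y] unfolding fy_def by simp
  qed
  have low: "Phi (a - norm w / \<sigma>) \<le> smoothed P \<sigma> x' yA"
    using NP_lower[OF sigma fAm fA01 hA, of w] unfolding sm' fA_def by simp
  have up: "smoothed P \<sigma> x' y \<le> Phi (b + norm w / \<sigma>)"
    using NP_upper[OF sigma fym fy01 hB, of w] unfolding sm' fy_def by simp
  have "b + norm w / \<sigma> < a - norm w / \<sigma>"
  proof -
    have "norm w < \<sigma> / 2 * (a - b)" using wD marg by simp
    then have "2 * norm w < \<sigma> * (a - b)" by simp
    then have "2 * (norm w / \<sigma>) < a - b" using sigma by (simp add: field_simps)
    then show ?thesis by simp
  qed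
  then have "Phi (b + norm w / \<sigma>) < Phi (a - norm w / \<sigma>)" by (rule Phi_strict)
  with low up show "smoothed P \<sigma> (phi_R x k \<theta>) y < smoothed P \<sigma> (phi_R x k \<theta>) yA"
    unfolding x'_def by simp
qed

end
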